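(* Let $k\ge t+3$ and $n\ge (k-t)(k-t+1)+t$, and let $\mathcal F\subseteq\binom{[n]}{k}$ be a $t$-intersecting family; write $\tau=\tau_t(\mathcal F)$. Then $$|\mathcal F|\le (k-t+1)^{\tau-t}\binom{\tau}{t}\binom{n-\tau}{k-\tau}.$$ Moreover, if $\mathcal B\subseteq\mathcal F$ is such that no member of $\mathcal B$ contains any member of $\mathcal T_t(\mathcal F)$, then $$|\mathcal B|\le (k-t+1)^{\tau-t+1}\binom{\tau}{t}\binom{n-\tau-1}{k-\tau-1},$$ with the convention $\binom{m}{-1}=0$.
   Context: A family is $t$-intersecting if any two members meet in at least $t$ elements. A $t$-cover of $\mathcal F$ is a set $S\subseteq[n]$ with $|S\cap F|\ge t$ for all $F\in\mathcal F$; $\tau_t(\mathcal F)$ is the minimum size of a $t$-cover, and $\mathcal T_t(\mathcal F)$ is the set of all $t$-covers of $\mathcal F$ of size $\tau_t(\mathcal F)$. *)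

theory Defs
  imports Main
begin

definition t_intersecting :: "nat \<Rightarrow> nat set set \<Rightarrow> bool" where
  "t_intersecting t F \<longleftrightarrow> (\<forall>A\<in>F. \<forall>B\<in>F. t \<le> card (A \<inter> B))"

definition t_cover :: "nat \<Rightarrow> nat \<Rightarrow> nat set set \<Rightarrow> nat set \<Rightarrow> bool" where
  "t_cover n t F S \<longleftrightarrow> S \<subseteq> {1..n} \<and> (\<forall>A\<in>F. t \<le> card (S \<inter> A))"

definition tau_t :: "nat \<Rightarrow> nat \<Rightarrow> nat set set \<Rightarrow> nat" where
  "tau_t n t F = (LEAST m. \<exists>S. t_cover n t F S \<and> card S = m)"

definition T_t :: "nat \<Rightarrow> nat \<Rightarrow> nat set set \<Rightarrow> nat set set" where
  "T_t n t F = {S. t_cover n t F S \<and> card S = tau_t n t F}"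

definition binom :: "nat \<Rightarrow> int \<Rightarrow> nat" where
  "binom m j = (if j < 0 then 0 else m choose (nat j))"

end

theory Submission
  imports Defs
begin

lemma binom_pow_le: "(a + d) choose d \<le> (a+1::nat)^d"
proof (induction d)
  case 0 show ?case by simp
next
  case (Suc d)
  have e: "Suc (a+d) * ((a+d) choose d) = (Suc (a+d) choose Suc d) * Suc d"
    by (rule Suc_times_binomial_eq)
  have "(a + Suc d choose Suc d) * Suc d = Suc (a+d) * ((a+d) choose d)" using e by simp
  also have "\<dots> \<le> Suc (a+d) * (a+1)^d" using Suc.IH by (rule mult_le_mono2)
  also have "\<dots> \<le> ((a+1)*Suc d) * (a+1)^d"
    by (rule mult_le_mono1) simp
  also have "\<dots> = (a+1)^(Suc d) * Suc d" by (simp add: algebra_simps)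
  finally show ?case by (metis mult_le_cancel2 zero_less_Suc)
qed

lemma arith_step:
  fixes n k t s :: nat
  assumes "t \<le> s" "s < k" "n \<ge> (k-t)*(k-t+1)+t"
  shows "(k-t+1)*(k-s) \<le> n - s"
proof -
  obtain b where b: "s = t + b" using assms(1) le_Suc_ex by blast
  obtain e0 where "k = Suc (s + e0)" using assms(2) less_imp_Suc_add by blast
  then have e: "k = t + b + (Suc e0)" "Suc e0 \<ge> 1" using b by auto
  have "(b+Suc e0+1)*Suc e0 + b \<le> (b+Suc e0)*(b+Suc e0+1)" by (simp add: algebra_simps)
  then show ?thesis using assms(3) b e by (simp add: algebra_simps)
qed

lemma choose_step:
  fixes n k t s :: nat
  assumes "t \<le> s" "s < k" "n \<ge> (k-t)*(k-t+1)+t"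
  shows "((n - Suc s) choose (k - Suc s)) * (k-t+1) \<le> (n - s) choose (k - s)"
proof -
  define N where "N = n - Suc s"
  define K where "K = k - Suc s"
  have "n \<ge> k"
  proof -
    have "k - t \<le> (k-t)*(k-t+1)" by simp
    then show ?thesis using assms by linarith
  qed
  then have nN: "n - s = Suc N" "k - s = Suc K" using assms(2) unfolding N_def K_def by auto
  have e: "Suc N * (N choose K) = (Suc N choose Suc K) * Suc K" by (rule Suc_times_binomial_eq)
  have a: "(k-t+1) * Suc K \<le> Suc N" using arith_step[OF assms] nN by simp
  have "(N choose K) * (k-t+1) * Suc K \<le> (N choose K) * Suc N"
    using mult_le_mono2[OF a, of "N choose K"] by (simp add: algebra_simps)
  also have "\<dots> = (Suc N choose Suc K) * Suc K" using e by (simp add: algebra_simps)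
  finally have "(N choose K) * (k-t+1) \<le> (Suc N choose Suc K)"
    by (metis mult_le_cancel2 zero_less_Suc)
  then show ?thesis using nN unfolding N_def K_def by simp
qed

lemma choose_chain:
  fixes n k t m d :: nat
  assumes "t \<le> m" "m + d \<le> k" "n \<ge> (k-t)*(k-t+1)+t"
  shows "((n - (m+d)) choose (k - (m+d))) * (k-t+1)^d \<le> (n - m) choose (k - m)"
  using assms(2)
proof (induction d)
  case 0 then show ?case by simp
next
  case (Suc d)
  have "((n - (m + Suc d)) choose (k - (m + Suc d))) * (k-t+1)^Suc d
      = (((n - Suc (m + d)) choose (k - Suc (m + d))) * (k-t+1)) * (k-t+1)^d" by (simp only: power_Suc add_Suc_right ac_simps)
  also have "\<dots> \<le> ((n - (m + d)) choose (k - (m + d))) * (k-t+1)^d"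
    by (rule mult_le_mono1, rule choose_step) (use assms Suc.prems in auto)
  also have "\<dots> \<le> (n - m) choose (k - m)" using Suc by simp
  finally show ?case .
qed

lemma count_supersets:
  fixes n k :: nat and S :: "nat set"
  assumes "S \<subseteq> {1..n}"
  shows "card {X. X \<subseteq> {1..n} \<and> card X = k \<and> S \<subseteq> X} \<le> (n - card S) choose (k - card S)"
proof -
  have fS: "finite S" using assms finite_subset by blast
  have sub: "{X. X \<subseteq> {1..n} \<and> card X = k \<and> S \<subseteq> X}
      \<subseteq> (\<lambda>Y. Y \<union> S) ` {Y. Y \<subseteq> {1..n} - S \<and> card Y = k - card S}"
  proof
    fix X assume X: "X \<in> {X. X \<subseteq> {1..n} \<and> card X = k \<and> S \<subseteq> X}"
    then have "X = (X - S) \<union> S" "X - S \<subseteq> {1..n} - S" "card (X - S) = k - card S"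
      using card_Diff_subset[OF fS] by auto
    then show "X \<in> (\<lambda>Y. Y \<union> S) ` {Y. Y \<subseteq> {1..n} - S \<and> card Y = k - card S}" by blast
  qed
  have "card {X. X \<subseteq> {1..n} \<and> card X = k \<and> S \<subseteq> X}
     \<le> card ((\<lambda>Y. Y \<union> S) ` {Y. Y \<subseteq> {1..n} - S \<and> card Y = k - card S})"
    by (rule card_mono[OF _ sub]) auto
  also have "\<dots> \<le> card {Y. Y \<subseteq> {1..n} - S \<and> card Y = k - card S}"
    by (rule card_image_le) auto
  also have "\<dots> = card ({1..n} - S) choose (k - card S)" by (rule n_subsets) auto
  also have "card ({1..n} - S) = n - card S" using card_Diff_subset[OF fS assms] by simp
  finally show ?thesis .
qed

lemma ge_m:
  fixes n k t m :: nat and F G :: "nat set set" and S :: "nat set"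
  assumes FA: "\<forall>A\<in>F. A \<subseteq> {1..n} \<and> card A = k"
    and nk: "n \<ge> (k-t)*(k-t+1)+t" and GF: "G \<subseteq> F" and tm: "t \<le> m" and mk: "m \<le> k"
    and fS: "finite S" and ms: "m \<le> card S"
  shows "card {X\<in>G. S \<subseteq> X} * (k-t+1)^(card S - m) \<le> (n-m) choose (k-m)"
proof (cases "card S \<le> k \<and> S \<subseteq> {1..n}")
  case False
  have "{X\<in>G. S \<subseteq> X} = {}"
  proof (rule ccontr)
    assume "{X\<in>G. S \<subseteq> X} \<noteq> {}"
    then obtain X where X: "X \<in> G" "S \<subseteq> X" by blast
    then have "X \<subseteq> {1..n}" "card X = k" using FA GF by auto
    then have "card S \<le> k" using X card_mono[of X S] finite_subset by (metis finite_atLeastAtMost)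
    then show False using False X \<open>X \<subseteq> {1..n}\<close> by blast
  qed
  then have "card {X\<in>G. S \<subseteq> X} = 0" by (metis card.empty)
  then show ?thesis by simp
next
  case True
  have "card {X\<in>G. S \<subseteq> X} \<le> card {X. X \<subseteq> {1..n} \<and> card X = k \<and> S \<subseteq> X}"
    by (rule card_mono) (use FA GF in auto)
  also have "\<dots> \<le> (n - card S) choose (k - card S)" using count_supersets True by blast
  finally have "card {X\<in>G. S \<subseteq> X} * (k-t+1)^(card S - m)
      \<le> ((n - card S) choose (k - card S)) * (k-t+1)^(card S - m)" by simp
  also have "\<dots> \<le> (n-m) choose (k-m)"
    using choose_chain[OF tm _ nk, of "card S - m"] ms True by simp
  finally show ?thesis .
qed

lemma main_ind:
  fixes n k t m :: nat and F G :: "nat set set"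
  assumes FA: "\<forall>A\<in>F. A \<subseteq> {1..n} \<and> card A = k"
    and nk: "n \<ge> (k-t)*(k-t+1)+t" and GF: "G \<subseteq> F" and tm: "t \<le> m" and mk: "m \<le> k"
    and tint: "t_intersecting t F"
    and P: "\<forall>S. finite S \<longrightarrow> card S < m \<longrightarrow> (\<exists>A\<in>F. card (S \<inter> A) < t) \<or> (\<forall>X\<in>G. \<not> S \<subseteq> X)"
  shows "finite S \<Longrightarrow> card {X\<in>G. S \<subseteq> X} * (k-t+1)^(card S) \<le> (k-t+1)^m * ((n-m) choose (k-m))"
proof (induction "m - card S" arbitrary: S rule: less_induct)
  case (less S)
  let ?c = "k-t+1"
  let ?M = "(k-t+1)^m * ((n-m) choose (k-m))"
  show ?case
  proof (cases "m \<le> card S")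
    case True
    have "card {X\<in>G. S \<subseteq> X} * ?c^(card S) = (card {X\<in>G. S \<subseteq> X} * ?c^(card S - m)) * ?c^m"
      using True by (simp add: power_add[symmetric])
    also have "\<dots> \<le> ((n-m) choose (k-m)) * ?c^m"
      using ge_m[OF FA nk GF tm mk less.prems True] by simp
    finally show ?thesis by (simp add: mult.commute)
  next
    case False
    then have sm: "card S < m" by simp
    from P less.prems sm have "(\<exists>A\<in>F. card (S \<inter> A) < t) \<or> (\<forall>X\<in>G. \<not> S \<subseteq> X)" by blast
    then show ?thesis
    proof
      assume "\<forall>X\<in>G. \<not> S \<subseteq> X"
      then have "{X\<in>G. S \<subseteq> X} = {}" by blast
      then have "card {X\<in>G. S \<subseteq> X} = 0" by (metis card.empty)
      then show ?thesis by simp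
    next
      assume "\<exists>A\<in>F. card (S \<inter> A) < t"
      then obtain A where AF: "A \<in> F" and jt: "card (S \<inter> A) < t" by blast
      define j where "j = card (S \<inter> A)"
      have Afin: "finite A" and Ak: "card A = k" using FA AF by (metis finite_atLeastAtMost finite_subset)+
      have "G \<subseteq> Pow {1..n}" using FA GF by blast
      then have Gfin: "finite G" by (rule finite_subset) simp
      define Ds where "Ds = {D. D \<subseteq> A - S \<and> card D = t - j}"
      have Dsfin: "finite Ds" unfolding Ds_def using Afin by (auto intro: finite_subset[of _ "Pow A"])
      have cover: "{X\<in>G. S \<subseteq> X} \<subseteq> (\<Union>D\<in>Ds. {X\<in>G. S \<union> D \<subseteq> X})"
      proof
        fix X assume X: "X \<in> {X\<in>G. S \<subseteq> X}"
        then have XF: "X \<in> F" using GF by blast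
        have tX: "t \<le> card (X \<inter> A)" using tint XF AF unfolding t_intersecting_def by blast
        have "X \<inter> A \<subseteq> (S \<inter> A) \<union> (X \<inter> (A - S))" by blast
        then have "card (X \<inter> A) \<le> card ((S \<inter> A) \<union> (X \<inter> (A - S)))"
          by (rule card_mono[rotated]) (use Afin in auto)
        also have "\<dots> \<le> j + card (X \<inter> (A - S))" unfolding j_def by (rule card_Un_le)
        finally have "t - j \<le> card (X \<inter> (A - S))" using tX by linarith
        then obtain D where D: "D \<subseteq> X \<inter> (A - S)" "card D = t - j"
          by (rule obtain_subset_with_card_n)
        then have "D \<in> Ds" unfolding Ds_def by blast
        moreover have "X \<in> {X\<in>G. S \<union> D \<subseteq> X}" using X D by blast
        ultimately show "X \<in> (\<Union>D\<in>Ds. {X\<in>G. S \<union> D \<subseteq> X})" by blast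
      qed
      have bD: "card {X\<in>G. S \<union> D \<subseteq> X} * ?c^(card S + (t - j)) \<le> ?M" if D: "D \<in> Ds" for D
      proof -
        have Dfin: "finite D" using D Afin unfolding Ds_def by (auto intro: finite_subset)
        have "card (S \<union> D) = card S + card D"
          by (rule card_Un_disjoint) (use less.prems Dfin D in \<open>auto simp: Ds_def\<close>)
        then have cSD: "card (S \<union> D) = card S + (t - j)" using D unfolding Ds_def by simp
        have "m - card (S \<union> D) < m - card S" using cSD sm jt unfolding j_def by linarith
        then have "card {X\<in>G. S \<union> D \<subseteq> X} * ?c^(card (S \<union> D)) \<le> ?M"
          using less.hyps[of "S \<union> D"] less.prems Dfin by blast
        then show ?thesis using cSD by simp
      qed
      have "card {X\<in>G. S \<subseteq> X} \<le> card (\<Union>D\<in>Ds. {X\<in>G. S \<union> D \<subseteq> X})"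
        by (rule card_mono[OF _ cover]) (use Dsfin Gfin in auto)
      also have "\<dots> \<le> (\<Sum>D\<in>Ds. card {X\<in>G. S \<union> D \<subseteq> X})" by (rule card_UN_le[OF Dsfin])
      finally have "card {X\<in>G. S \<subseteq> X} * ?c^(card S + (t - j))
          \<le> (\<Sum>D\<in>Ds. card {X\<in>G. S \<union> D \<subseteq> X}) * ?c^(card S + (t - j))" by simp
      also have "\<dots> = (\<Sum>D\<in>Ds. card {X\<in>G. S \<union> D \<subseteq> X} * ?c^(card S + (t - j)))"
        by (simp add: sum_distrib_right)
      also have "\<dots> \<le> (\<Sum>D\<in>Ds. ?M)" by (rule sum_mono) (rule bD)
      also have "\<dots> = card Ds * ?M" by simp
      also have "card Ds = card (A - S) choose (t - j)" unfolding Ds_def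
        by (rule n_subsets) (use Afin in auto)
      also have "card (A - S) = (k - t) + (t - j)"
      proof -
        have "card (A - S) = card A - card (A \<inter> S)" by (rule card_Diff_subset_Int) (use Afin in auto)
        then show ?thesis using Ak jt tm mk unfolding j_def by (simp add: Int_commute)
      qed
      also have "((k - t) + (t - j) choose (t - j)) \<le> ?c^(t-j)" using binom_pow_le by simp
      finally have "card {X\<in>G. S \<subseteq> X} * ?c^(card S) * ?c^(t - j) \<le> ?M * ?c^(t-j)"
        by (simp add: power_add ac_simps)
      then show ?thesis by (simp del: mult_le_cancel2 add: mult_le_cancel2[symmetric])
    qed
  qed
qed

lemma bound_G:
  fixes n k t m :: nat and F G :: "nat set set" and T0 :: "nat set"
  assumes FA: "\<forall>A\<in>F. A \<subseteq> {1..n} \<and> card A = k"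
    and nk: "n \<ge> (k-t)*(k-t+1)+t" and GF: "G \<subseteq> F" and tm: "t \<le> m" and mk: "m \<le> k"
    and tint: "t_intersecting t F"
    and P: "\<forall>S. finite S \<longrightarrow> card S < m \<longrightarrow> (\<exists>A\<in>F. card (S \<inter> A) < t) \<or> (\<forall>X\<in>G. \<not> S \<subseteq> X)"
    and T0fin: "finite T0" and T0: "\<forall>X\<in>G. t \<le> card (T0 \<inter> X)"
  shows "card G \<le> (k-t+1)^(m-t) * (card T0 choose t) * ((n-m) choose (k-m))"
proof -
  let ?c = "k-t+1"
  let ?M = "(k-t+1)^m * ((n-m) choose (k-m))"
  define Ts where "Ts = {T. T \<subseteq> T0 \<and> card T = t}"
  have Tsfin: "finite Ts" unfolding Ts_def using T0fin by (auto intro: finite_subset[of _ "Pow T0"])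
  have "G \<subseteq> Pow {1..n}" using FA GF by blast
  then have Gfin: "finite G" by (rule finite_subset) simp
  have cover: "G \<subseteq> (\<Union>T\<in>Ts. {X\<in>G. T \<subseteq> X})"
  proof
    fix X assume X: "X \<in> G"
    then have "t \<le> card (T0 \<inter> X)" using T0 by blast
    then obtain T where T: "T \<subseteq> T0 \<inter> X" "card T = t" by (rule obtain_subset_with_card_n)
    then show "X \<in> (\<Union>T\<in>Ts. {X\<in>G. T \<subseteq> X})" using X unfolding Ts_def by blast
  qed
  have bT: "card {X\<in>G. T \<subseteq> X} * ?c^t \<le> ?M" if T: "T \<in> Ts" for T
  proof -
    have "finite T" "card T = t" using T T0fin unfolding Ts_def by (auto intro: finite_subset)
    then show ?thesis using main_ind[OF FA nk GF tm mk tint P, of T] by simp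
  qed
  have "card G \<le> card (\<Union>T\<in>Ts. {X\<in>G. T \<subseteq> X})"
    by (rule card_mono[OF _ cover]) (use Tsfin Gfin in auto)
  also have "\<dots> \<le> (\<Sum>T\<in>Ts. card {X\<in>G. T \<subseteq> X})" by (rule card_UN_le[OF Tsfin])
  finally have "card G * ?c^t \<le> (\<Sum>T\<in>Ts. card {X\<in>G. T \<subseteq> X}) * ?c^t" by simp
  also have "\<dots> = (\<Sum>T\<in>Ts. card {X\<in>G. T \<subseteq> X} * ?c^t)" by (simp add: sum_distrib_right)
  also have "\<dots> \<le> (\<Sum>T\<in>Ts. ?M)" by (rule sum_mono) (rule bT)
  also have "\<dots> = card Ts * ?M" by simp
  also have "card Ts = card T0 choose t" unfolding Ts_def by (rule n_subsets[OF T0fin])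
  also have "?M = ?c^(m-t) * ((n-m) choose (k-m)) * ?c^t"
    using tm by (simp add: power_add[symmetric])
  finally have "card G * ?c^t \<le> (?c^(m-t) * (card T0 choose t) * ((n-m) choose (k-m))) * ?c^t"
    by (simp add: ac_simps)
  then show ?thesis by (simp del: mult_le_cancel2 add: mult_le_cancel2[symmetric])
qed

theorem lemma3p2:
  fixes n k t :: nat and F :: "nat set set"
  assumes "k \<ge> t + 3"
    and "n \<ge> (k - t) * (k - t + 1) + t"
    and "\<forall>A\<in>F. A \<subseteq> {1..n} \<and> card A = k"
    and "t_intersecting t F"
  shows "card F \<le> (k - t + 1) ^ (tau_t n t F - t) * (tau_t n t F choose t)
                   * ((n - tau_t n t F) choose (k - tau_t n t F))
         \<and> (\<forall>B. B \<subseteq> F \<longrightarrow> (\<forall>X\<in>B. \<forall>T\<in>T_t n t F. \<not> T \<subseteq> X) \<longrightarrow>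
           card B \<le> (k - t + 1) ^ (tau_t n t F - t + 1) * (tau_t n t F choose t)
                   * binom (n - tau_t n t F - 1) (int k - int (tau_t n t F) - 1))"
proof (cases "F = {}")
  case True
  then show ?thesis by simp
next
  case False
  note kt = assms(1) and nk = assms(2) and FA = assms(3) and tint = assms(4)
  define \<tau> where "\<tau> = tau_t n t F"
  obtain A0 where A0: "A0 \<in> F" using False by blast
  have A0cov: "t_cover n t F A0" using A0 FA tint unfolding t_cover_def t_intersecting_def
    by (metis Int_commute)
  have ex: "\<exists>S. t_cover n t F S \<and> card S = card A0" using A0cov by blast
  have ex2: "\<exists>m. \<exists>S. t_cover n t F S \<and> card S = m" using ex by blast
  have tau_le: "\<tau> \<le> card S" if "t_cover n t F S" for S
    unfolding \<tau>_def tau_t_def by (rule Least_le) (use that in blast)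
  obtain T0 where T0: "t_cover n t F T0" "card T0 = \<tau>"
    using LeastI_ex[of "\<lambda>m. \<exists>S. t_cover n t F S \<and> card S = m", OF ex2]
    unfolding \<tau>_def tau_t_def by blast
  have T0fin: "finite T0" using T0(1) unfolding t_cover_def by (meson finite_atLeastAtMost finite_subset)
  have tauk: "\<tau> \<le> k" using tau_le[OF A0cov] A0 FA by simp
  have ttau: "t \<le> \<tau>"
  proof -
    have "t \<le> card (T0 \<inter> A0)" using T0(1) A0 unfolding t_cover_def by blast
    also have "\<dots> \<le> card T0" by (rule card_mono[OF T0fin]) blast
    finally show ?thesis using T0 by simp
  qed
  have T0X: "\<forall>X\<in>G. t \<le> card (T0 \<inter> X)" if "G \<subseteq> F" for G
    using T0(1) that unfolding t_cover_def by blast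
  have notcov: "(\<exists>A\<in>F. card (S \<inter> A) < t) \<or> (\<forall>X\<in>F. \<not> S \<subseteq> X)" if "\<not> t_cover n t F S" for S
  proof (cases "S \<subseteq> {1..n}")
    case True
    then show ?thesis using that unfolding t_cover_def by (meson not_le)
  next
    case False
    then show ?thesis using FA by blast
  qed
  have P1: "\<forall>S. finite S \<longrightarrow> card S < \<tau> \<longrightarrow> (\<exists>A\<in>F. card (S \<inter> A) < t) \<or> (\<forall>X\<in>F. \<not> S \<subseteq> X)"
    using notcov tau_le by (meson not_le)
  have part1: "card F \<le> (k - t + 1) ^ (\<tau> - t) * (\<tau> choose t) * ((n - \<tau>) choose (k - \<tau>))"
    using bound_G[OF FA nk order_refl ttau tauk tint P1 T0fin T0X[OF order_refl]] T0(2) by simp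
  have part2: "card B \<le> (k - t + 1) ^ (\<tau> - t + 1) * (\<tau> choose t)
                   * binom (n - \<tau> - 1) (int k - int \<tau> - 1)"
    if BF: "B \<subseteq> F" and BT: "\<forall>X\<in>B. \<forall>T\<in>T_t n t F. \<not> T \<subseteq> X" for B
  proof (cases "\<tau> = k")
    case True
    have "B = {}"
    proof (rule ccontr)
      assume "B \<noteq> {}"
      then obtain X where X: "X \<in> B" by blast
      then have "t_cover n t F X" using BF FA tint unfolding t_cover_def t_intersecting_def
        by (metis Int_commute subsetD)
      moreover have "card X = k" using X BF FA by blast
      ultimately have "X \<in> T_t n t F" using True unfolding T_t_def \<tau>_def by simp
      then show False using BT X by blast
    qed
    then show ?thesis by simp
  next
    case False
    then have tk: "\<tau> + 1 \<le> k" using tauk by simp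
    have P2: "\<forall>S. finite S \<longrightarrow> card S < \<tau> + 1 \<longrightarrow> (\<exists>A\<in>F. card (S \<inter> A) < t) \<or> (\<forall>X\<in>B. \<not> S \<subseteq> X)"
    proof (intro allI impI)
      fix S :: "nat set" assume fS: "finite S" and cS: "card S < \<tau> + 1"
      show "(\<exists>A\<in>F. card (S \<inter> A) < t) \<or> (\<forall>X\<in>B. \<not> S \<subseteq> X)"
      proof (cases "t_cover n t F S")
        case True
        then have "card S = \<tau>" using tau_le[OF True] cS by simp
        then have "S \<in> T_t n t F" using True unfolding T_t_def \<tau>_def by simp
        then show ?thesis using BT by blast
      next
        case False
        then show ?thesis using notcov[OF False] BF by blast
      qed
    qed
    have "card B \<le> (k-t+1)^(\<tau>+1-t) * (card T0 choose t) * ((n-(\<tau>+1)) choose (k-(\<tau>+1)))"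
      by (rule bound_G[OF FA nk BF _ tk tint P2 T0fin T0X[OF BF]]) (use ttau in simp)
    moreover have "binom (n - \<tau> - 1) (int k - int \<tau> - 1) = (n-(\<tau>+1)) choose (k-(\<tau>+1))"
      using tk unfolding binom_def by (simp add: nat_diff_distrib)
    moreover have "\<tau>+1-t = \<tau> - t + 1" using ttau by simp
    ultimately show ?thesis using T0(2) by simp
  qed
  show ?thesis using part1 part2 unfolding \<tau>_def by blast
qed

end
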